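(* Let $(E,\rho_\theta)$ be a complete $b_v(\theta)$ metric space and let $S:E\to E$ satisfy $\rho_\theta(Su,Sw)\le\beta\rho_\theta(u,Su)+\gamma\rho_\theta(w,Sw)$ for all $u,w\in E$, where $\beta,\gamma\ge0$ are constants with $\beta+\gamma<1$, and where $\Gamma_1<\frac1{\Gamma_2}$ with $\Gamma_1=\min\{\beta,\gamma\}$ and $\Gamma_2=\max\{\theta(u,Su),\theta(Su,u)\}$ (for all $u\in E$). Then $S$ has a unique fixed point.
   Context: Let $E$ be a nonempty set, $\theta:E\times E\to[1,\infty)$ a function and $v\in\mathbb{N}$. A map $\rho_\theta:E\times E\to[0,\infty)$ is a $b_v(\theta)$ metric (and $(E,\rho_\theta)$ a $b_v(\theta)$ metric space) if for all $u,w\in E$: $\rho_\theta(u,w)=0$ iff $u=w$; $\rho_\theta(u,w)=\rho_\theta(w,u)$; and for all $u,z_1,\dots,z_v,w\in E$ pairwise distinct, $\rho_\theta(u,w)\le\theta(u,w)[\rho_\theta(u,z_1)+\rho_\theta(z_1,z_2)+\dots+\rho_\theta(z_{v-1},z_v)+\rho_\theta(z_v,w)]$. A sequence $\{u_n\}$ converges to $u$ if for every $\varepsilon>0$ there is $n_0$ with $\rho_\theta(u_n,u)<\varepsilon$ for all $n\ge n_0$; it is Cauchy if for every $\varepsilon>0$ there is $n_0$ with $\rho_\theta(u_n,u_{n+p})<\varepsilon$ for all $n\ge n_0$ and $p>0$; the space is complete if every Cauchy sequence converges in $E$. *)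

theory Defs
  imports Main "HOL.Real"
begin

definition path_sum :: "('a \<Rightarrow> 'a \<Rightarrow> real) \<Rightarrow> 'a list \<Rightarrow> real" where
  "path_sum \<rho> p = (\<Sum>i < length p - 1. \<rho> (p ! i) (p ! Suc i))"

definition bv_metric :: "'a set \<Rightarrow> ('a \<Rightarrow> 'a \<Rightarrow> real) \<Rightarrow> nat \<Rightarrow> ('a \<Rightarrow> 'a \<Rightarrow> real) \<Rightarrow> bool" where
  "bv_metric E \<theta> v \<rho> \<longleftrightarrow>
     E \<noteq> {} \<and> v \<ge> 1 \<and>
     (\<forall>u\<in>E. \<forall>w\<in>E. \<theta> u w \<ge> 1) \<and>
     (\<forall>u\<in>E. \<forall>w\<in>E. \<rho> u w \<ge> 0) \<and>
     (\<forall>u\<in>E. \<forall>w\<in>E. \<rho> u w = 0 \<longleftrightarrow> u = w) \<and>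
     (\<forall>u\<in>E. \<forall>w\<in>E. \<rho> u w = \<rho> w u) \<and>
     (\<forall>u\<in>E. \<forall>w\<in>E. \<forall>zs. length zs = v \<longrightarrow> set zs \<subseteq> E \<longrightarrow> distinct (u # zs @ [w]) \<longrightarrow>
         \<rho> u w \<le> \<theta> u w * path_sum \<rho> (u # zs @ [w]))"

definition bv_converges :: "('a \<Rightarrow> 'a \<Rightarrow> real) \<Rightarrow> (nat \<Rightarrow> 'a) \<Rightarrow> 'a \<Rightarrow> bool" where
  "bv_converges \<rho> x u \<longleftrightarrow> (\<forall>\<epsilon>>0. \<exists>n0. \<forall>n\<ge>n0. \<rho> (x n) u < \<epsilon>)"

definition bv_cauchy :: "('a \<Rightarrow> 'a \<Rightarrow> real) \<Rightarrow> (nat \<Rightarrow> 'a) \<Rightarrow> bool" where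
  "bv_cauchy \<rho> x \<longleftrightarrow> (\<forall>\<epsilon>>0. \<exists>n0. \<forall>n\<ge>n0. \<forall>p>0. \<rho> (x n) (x (n + p)) < \<epsilon>)"

definition bv_complete :: "'a set \<Rightarrow> ('a \<Rightarrow> 'a \<Rightarrow> real) \<Rightarrow> bool" where
  "bv_complete E \<rho> \<longleftrightarrow>
     (\<forall>x. (\<forall>n. x n \<in> E) \<longrightarrow> bv_cauchy \<rho> x \<longrightarrow> (\<exists>u\<in>E. bv_converges \<rho> x u))"

end

theory Submission
  imports Defs Complex_Main
begin
lemma path_split:
  assumes "v \<ge> 1"
  shows "path_sum \<rho> (a # map (\<lambda>i. x (m+i)) [0..<v] @ [b]) =
    \<rho> a (x m) + (\<Sum>i<v-1. \<rho> (x (m+i)) (x (Suc (m+i)))) + \<rho> (x (m+v-1)) b"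
proof -
  obtain w where v: "v = Suc w" using assms by (cases v) auto
  define p where "p = a # map (\<lambda>i. x (m+i)) [0..<v] @ [b]"
  have p0: "p ! 0 = a" by (simp add: p_def)
  have pS: "p ! Suc i = x (m+i)" if "i < v" for i using that by (simp add: p_def nth_append)
  have pv: "p ! Suc v = b" by (simp add: p_def nth_append)
  have "path_sum \<rho> p = (\<Sum>i<Suc (Suc w). \<rho> (p ! i) (p ! Suc i))"
    by (simp add: path_sum_def p_def v)
  also have "\<dots> = \<rho> (p!0) (p!1) + (\<Sum>i<w. \<rho> (p ! Suc i) (p ! Suc (Suc i))) + \<rho> (p ! Suc w) (p ! Suc (Suc w))"
    using sum.lessThan_Suc_shift[of "\<lambda>i. \<rho> (p ! i) (p ! Suc i)" "Suc w"]
      sum.lessThan_Suc[of "\<lambda>i. \<rho> (p ! Suc i) (p ! Suc (Suc i))" w] by simp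
  also have "(\<Sum>i<w. \<rho> (p ! Suc i) (p ! Suc (Suc i))) = (\<Sum>i<w. \<rho> (x (m+i)) (x (Suc (m+i))))"
    by (rule sum.cong) (auto simp: pS v)
  finally have "path_sum \<rho> p = \<rho> a (x m) + (\<Sum>i<w. \<rho> (x (m+i)) (x (Suc (m+i)))) + \<rho> (x (m+w)) b"
    using p0 pS[of 0] pS[of w] pv by (simp add: v)
  then show ?thesis unfolding p_def by (simp add: v)
qed

theorem mainTheorem12:
  fixes E :: "'a set" and \<theta> \<rho> :: "'a \<Rightarrow> 'a \<Rightarrow> real" and v :: nat
    and S :: "'a \<Rightarrow> 'a" and \<beta> \<gamma> :: real
  assumes "bv_metric E \<theta> v \<rho>"
    and "bv_complete E \<rho>"
    and "\<forall>u\<in>E. S u \<in> E"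
    and "\<beta> \<ge> 0" and "\<gamma> \<ge> 0" and "\<beta> + \<gamma> < 1"
    and "\<forall>u\<in>E. \<forall>w\<in>E. \<rho> (S u) (S w) \<le> \<beta> * \<rho> u (S u) + \<gamma> * \<rho> w (S w)"
    and "\<forall>u\<in>E. min \<beta> \<gamma> < 1 / max (\<theta> u (S u)) (\<theta> (S u) u)"
  shows "\<exists>!u. u \<in> E \<and> S u = u"
proof -
  note M = assms(1)[unfolded bv_metric_def]
  have Ene: "E \<noteq> {}" and v1: "v \<ge> 1" and th1: "\<And>u w. u \<in> E \<Longrightarrow> w \<in> E \<Longrightarrow> \<theta> u w \<ge> 1"
    and nn: "\<And>u w. u \<in> E \<Longrightarrow> w \<in> E \<Longrightarrow> \<rho> u w \<ge> 0"
    and z: "\<And>u w. u \<in> E \<Longrightarrow> w \<in> E \<Longrightarrow> \<rho> u w = 0 \<longleftrightarrow> u = w"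
    and sym: "\<And>u w. u \<in> E \<Longrightarrow> w \<in> E \<Longrightarrow> \<rho> u w = \<rho> w u"
    and tri: "\<And>u w zs. u \<in> E \<Longrightarrow> w \<in> E \<Longrightarrow> length zs = v \<Longrightarrow> set zs \<subseteq> E \<Longrightarrow>
         distinct (u # zs @ [w]) \<Longrightarrow> \<rho> u w \<le> \<theta> u w * path_sum \<rho> (u # zs @ [w])"
    using M by blast+
  have SE: "\<And>u. u \<in> E \<Longrightarrow> S u \<in> E" using assms(3) by blast
  have C: "\<And>u w. u \<in> E \<Longrightarrow> w \<in> E \<Longrightarrow> \<rho> (S u) (S w) \<le> \<beta> * \<rho> u (S u) + \<gamma> * \<rho> w (S w)"
    using assms(7) by blast
  have uniq: "u = w" if "u \<in> E" "S u = u" "w \<in> E" "S w = w" for u w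
  proof -
    have "\<rho> u w \<le> \<beta> * \<rho> u u + \<gamma> * \<rho> w w" using C[OF that(1,3)] that by simp
    then have "\<rho> u w \<le> 0" using z[of u u] z[of w w] that by simp
    then show ?thesis using nn[OF that(1,3)] z[OF that(1,3)] by simp
  qed
  have ex: "\<exists>u. u \<in> E \<and> S u = u"
  proof -
    obtain u0 where u0: "u0 \<in> E" using Ene by blast
    define x where "x n = (S ^^ n) u0" for n
    have xS: "x (Suc n) = S (x n)" for n by (simp add: x_def)
    have xE: "x n \<in> E" for n by (induction n) (auto simp: xS u0 SE, simp add: x_def u0)
    define d where "d n = \<rho> (x n) (x (Suc n))" for n
    define k where "k = \<beta> / (1 - \<gamma>)"
    have dnn: "d n \<ge> 0" for n unfolding d_def using nn xE by blast
    have k0: "k \<ge> 0" and k1: "k < 1" using assms(4,5,6) by (auto simp: k_def)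
    have dstep: "d (Suc n) \<le> k * d n" for n
    proof -
      have "d (Suc n) \<le> \<beta> * d n + \<gamma> * d (Suc n)"
        using C[OF xE xE, of n "Suc n"] by (simp add: d_def xS)
      then have "(1 - \<gamma>) * d (Suc n) \<le> \<beta> * d n" by (simp add: algebra_simps)
      then show ?thesis using assms(4,5,6) by (simp add: k_def pos_le_divide_eq mult.commute)
    qed
    have dpow: "d (n + j) \<le> k ^ j * d n" for n j
    proof (induction j)
      case (Suc j)
      have "d (n + Suc j) \<le> k * d (n + j)" using dstep[of "n+j"] by simp
      also have "\<dots> \<le> k * (k ^ j * d n)" by (rule mult_left_mono[OF Suc.IH k0])
      finally show ?case by (simp add: algebra_simps)
    qed simp
    define B where "B n = k ^ n * d 0" for n
    have dB: "d j \<le> B n" if "j \<ge> n" for j n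
    proof -
      have "d j \<le> k ^ j * d 0" using dpow[of 0 j] by simp
      also have "\<dots> \<le> k ^ n * d 0" using that k0 k1 dnn[of 0]
        by (intro mult_right_mono power_decreasing) auto
      finally show ?thesis by (simp add: B_def)
    qed
    have Bnn: "B n \<ge> 0" for n using k0 dnn[of 0] by (simp add: B_def)
    have Blim: "B \<longlonglongrightarrow> 0" unfolding B_def
      using LIMSEQ_power_zero[of k] k0 k1 by (auto intro: tendsto_mult_left_zero)
    show ?thesis
    proof (cases "\<exists>n. x n = x (Suc n)")
      case True
      then obtain n where "x n = x (Suc n)" by blast
      then show ?thesis using xE xS by metis
    next
      case False
      have dpos: "d n > 0" for n using False z[OF xE xE] dnn[of n] unfolding d_def
        by (metis less_eq_real_def)
      have injx: "n = m" if "x n = x m" for n m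
      proof (rule ccontr)
        assume "n \<noteq> m"
        then consider "n < m" | "m < n" by linarith
        then show False
        proof cases
          case 1
          then obtain j where m: "m = n + Suc j" using less_imp_Suc_add[OF 1] by auto
          have "d m = d n" unfolding d_def xS that ..
          moreover have "d m \<le> k ^ Suc j * d n" using dpow[of n "Suc j"] m by simp
          moreover have "k ^ Suc j < 1"
          proof -
            have "k ^ j \<le> 1" using k0 k1 by (simp add: power_le_one)
            then have "k * k ^ j \<le> k * 1" using k0 by (rule mult_left_mono)
            then show ?thesis using k1 by simp
          qed
          ultimately show False using mult_strict_right_mono[of "k ^ Suc j" 1 "d n"] dpos[of n] by linarith
        next
          case 2
          then obtain j where m: "n = m + Suc j" using less_imp_Suc_add[OF 2] by auto
          have "d m = d n" unfolding d_def xS that ..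
          moreover have "d n \<le> k ^ Suc j * d m" using dpow[of m "Suc j"] m by simp
          moreover have "k ^ Suc j < 1"
          proof -
            have "k ^ j \<le> 1" using k0 k1 by (simp add: power_le_one)
            then have "k * k ^ j \<le> k * 1" using k0 by (rule mult_left_mono)
            then show ?thesis using k1 by simp
          qed
          ultimately show False using mult_strict_right_mono[of "k ^ Suc j" 1 "d m"] dpos[of m] by linarith
        qed
      qed
      have cauchy: "bv_cauchy \<rho> x" unfolding bv_cauchy_def
      proof (intro allI impI)
        fix \<epsilon> :: real assume "\<epsilon> > 0"
        then obtain N where N: "\<And>n. n \<ge> N \<Longrightarrow> B n < \<epsilon>"
          using Blim Bnn unfolding LIMSEQ_def dist_real_def by fastforce
        show "\<exists>n0. \<forall>n\<ge>n0. \<forall>p>0. \<rho> (x n) (x (n + p)) < \<epsilon>"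
        proof (intro exI[of _ "Suc N"] allI impI)
          fix n p :: nat assume n: "Suc N \<le> n" and "0 < p"
          obtain n' where n': "n = Suc n'" using n by (cases n) auto
          have "\<rho> (x n) (x (n + p)) = \<rho> (S (x n')) (S (x (n' + p)))" by (simp add: n' xS)
          also have "\<dots> \<le> \<beta> * d n' + \<gamma> * d (n' + p)"
            using C[OF xE xE] by (simp add: d_def xS)
          also have "\<dots> \<le> \<beta> * B n' + \<gamma> * B n'"
            using dB[of n' n'] dB[of n' "n'+p"] assms(4,5) by (intro add_mono mult_left_mono) auto
          also have "\<dots> \<le> B n'"
          proof -
            have "(\<beta> + \<gamma>) * B n' \<le> 1 * B n'" using assms(6) Bnn[of n'] by (intro mult_right_mono) auto
            then show ?thesis by (simp add: distrib_right)
          qed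
          also have "\<dots> < \<epsilon>" using N n n' by simp
          finally show "\<rho> (x n) (x (n + p)) < \<epsilon>" .
        qed
      qed
      obtain u where uE: "u \<in> E" and conv: "bv_converges \<rho> x u"
        using assms(2) xE cauchy unfolding bv_complete_def by blast
      define e where "e n = \<rho> (x n) u" for n
      have elim: "e \<longlonglongrightarrow> 0" unfolding LIMSEQ_def dist_real_def e_def
        using conv nn[OF xE uE] unfolding bv_converges_def by (simp add: abs_of_nonneg)
      have "S u = u"
      proof (rule ccontr)
        assume ne: "S u \<noteq> u"
        define r where "r = \<rho> u (S u)"
        have rpos: "r > 0" using ne z[OF uE SE[OF uE]] nn[OF uE SE[OF uE]] unfolding r_def
          by (metis less_eq_real_def)
        have avoid: "\<exists>N. \<forall>n\<ge>N. x n \<noteq> a" for a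
        proof (cases "\<exists>n0. x n0 = a")
          case True
          then obtain n0 where "x n0 = a" by blast
          then show ?thesis using injx by (intro exI[of _ "Suc n0"]) fastforce
        qed auto
        obtain N1 where N1: "\<And>n. n \<ge> N1 \<Longrightarrow> x n \<noteq> u" using avoid by blast
        obtain N2 where N2: "\<And>n. n \<ge> N2 \<Longrightarrow> x n \<noteq> S u" using avoid by blast
        define \<theta>1 where "\<theta>1 = \<theta> u (S u)"
        define \<theta>2 where "\<theta>2 = \<theta> (S u) u"
        have t1: "\<theta>1 \<ge> 1" and t2: "\<theta>2 \<ge> 1" using th1 uE SE unfolding \<theta>1_def \<theta>2_def by auto
        define zs where "zs n = map (\<lambda>i. x (Suc n + i)) [0..<v]" for n
        have zsE: "set (zs n) \<subseteq> E" for n using xE by (auto simp: zs_def)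
        have zsl: "length (zs n) = v" for n by (simp add: zs_def)
        have zsd: "distinct (zs n)" for n unfolding zs_def distinct_map
          by (auto simp: inj_on_def dest!: injx)
        have zsu: "u \<notin> set (zs n)" "S u \<notin> set (zs n)" if "n \<ge> max N1 N2" for n
        proof -
          have h: "x (Suc n + i) \<noteq> u \<and> x (Suc n + i) \<noteq> S u" for i
            using N1[of "Suc n+i"] N2[of "Suc n+i"] that by auto
          have "set (zs n) = (\<lambda>i. x (Suc n + i)) ` {0..<v}" by (simp add: zs_def)
          then show "u \<notin> set (zs n)" using h by (metis (no_types, lifting) imageE)
          show "S u \<notin> set (zs n)" using h \<open>set (zs n) = _\<close> by (metis (no_types, lifting) imageE)
        qed
        have sumB: "(\<Sum>i<v-1. \<rho> (x (Suc n+i)) (x (Suc (Suc n+i)))) \<le> real (v-1) * B n" for n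
        proof -
          have "(\<Sum>i<v-1. \<rho> (x (Suc n+i)) (x (Suc (Suc n+i)))) \<le> (\<Sum>i<v-1. B n)"
            by (rule sum_mono) (simp add: dB[folded d_def] flip: d_def)
          then show ?thesis by simp
        qed
        have ev1: "r \<le> \<theta>1 * (e (Suc n) + real (v-1) * B n + \<beta> * B n + \<gamma> * r)" if n: "n \<ge> max N1 N2" for n
        proof -
          have P: "r \<le> \<theta>1 * path_sum \<rho> (u # zs n @ [S u])"
            unfolding r_def \<theta>1_def
            using tri[OF uE SE[OF uE] zsl zsE] zsd zsu[OF n] ne by auto
          have Q: "path_sum \<rho> (u # zs n @ [S u]) = \<rho> u (x (Suc n)) + (\<Sum>i<v-1. \<rho> (x (Suc n+i)) (x (Suc (Suc n+i)))) + \<rho> (x (Suc n+v-1)) (S u)"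
            unfolding zs_def by (rule path_split[OF v1])
          have R: "\<rho> u (x (Suc n)) = e (Suc n)" using sym xE uE by (simp add: e_def)
          have T: "\<rho> (x (Suc n+v-1)) (S u) \<le> \<beta> * B n + \<gamma> * r"
          proof -
            have eq: "Suc n + v - 1 = Suc (n + v - 1)" using v1 by simp
            have "\<rho> (x (Suc n+v-1)) (S u) \<le> \<beta> * d (n + v - 1) + \<gamma> * r"
              unfolding eq xS d_def r_def using C[OF xE uE] by (simp add: xS)
            also have "\<dots> \<le> \<beta> * B n + \<gamma> * r"
            proof -
              have "d (n + v - 1) \<le> B n" using dB[of n "n+v-1"] v1 by simp
              then show ?thesis using assms(4) by (simp add: mult_left_mono)
            qed
            finally show ?thesis .
          qed
          have "path_sum \<rho> (u # zs n @ [S u]) \<le> e (Suc n) + real (v-1) * B n + \<beta> * B n + \<gamma> * r"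
            using Q R T sumB[of n] by linarith
          then have "\<theta>1 * path_sum \<rho> (u # zs n @ [S u]) \<le> \<theta>1 * (e (Suc n) + real (v-1) * B n + \<beta> * B n + \<gamma> * r)"
            using t1 by (intro mult_left_mono) auto
          then show ?thesis using P by linarith
        qed
        have ev2: "r \<le> \<theta>2 * (\<beta> * r + \<gamma> * B n + real (v-1) * B n + e (n + v))" if n: "n \<ge> max N1 N2" for n
        proof -
          have "r = \<rho> (S u) u" using sym uE SE r_def by simp
          also have "\<dots> \<le> \<theta>2 * path_sum \<rho> (S u # zs n @ [u])"
            unfolding \<theta>2_def
            using tri[OF SE[OF uE] uE zsl zsE] zsd zsu[OF n] ne by auto
          finally have P: "r \<le> \<theta>2 * path_sum \<rho> (S u # zs n @ [u])" .
          have Q: "path_sum \<rho> (S u # zs n @ [u]) = \<rho> (S u) (x (Suc n)) + (\<Sum>i<v-1. \<rho> (x (Suc n+i)) (x (Suc (Suc n+i)))) + \<rho> (x (Suc n+v-1)) u"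
            unfolding zs_def by (rule path_split[OF v1])
          have R: "\<rho> (x (Suc n+v-1)) u = e (n + v)" using v1 by (simp add: e_def)
          have T: "\<rho> (S u) (x (Suc n)) \<le> \<beta> * r + \<gamma> * B n"
          proof -
            have "\<rho> (S u) (x (Suc n)) \<le> \<beta> * r + \<gamma> * d n"
              unfolding xS d_def r_def using C[OF uE xE] by (simp add: xS)
            also have "\<dots> \<le> \<beta> * r + \<gamma> * B n" using dB[of n n] assms(5)
              by (simp add: mult_left_mono)
            finally show ?thesis .
          qed
          have "path_sum \<rho> (S u # zs n @ [u]) \<le> \<beta> * r + \<gamma> * B n + real (v-1) * B n + e (n + v)"
            using Q R T sumB[of n] by linarith
          then have "\<theta>2 * path_sum \<rho> (S u # zs n @ [u]) \<le> \<theta>2 * (\<beta> * r + \<gamma> * B n + real (v-1) * B n + e (n + v))"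
            using t2 by (intro mult_left_mono) auto
          then show ?thesis using P by linarith
        qed
        have l1: "(\<lambda>n. \<theta>1 * (e (Suc n) + real (v-1) * B n + \<beta> * B n + \<gamma> * r)) \<longlonglongrightarrow> \<theta>1 * (0 + real (v-1) * 0 + \<beta> * 0 + \<gamma> * r)"
          by (intro tendsto_intros Blim LIMSEQ_Suc elim)
        have l2: "(\<lambda>n. \<theta>2 * (\<beta> * r + \<gamma> * B n + real (v-1) * B n + e (n + v))) \<longlonglongrightarrow> \<theta>2 * (\<beta> * r + \<gamma> * 0 + real (v-1) * 0 + 0)"
          by (intro tendsto_intros Blim elim[THEN LIMSEQ_ignore_initial_segment[where k=v]])
        have r1: "r \<le> \<theta>1 * (\<gamma> * r)"
        proof -
          have "eventually (\<lambda>n. r \<le> \<theta>1 * (e (Suc n) + real (v-1) * B n + \<beta> * B n + \<gamma> * r)) sequentially"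
            unfolding eventually_sequentially using ev1 by blast
          from tendsto_le[OF trivial_limit_sequentially l1 tendsto_const this] show ?thesis by simp
        qed
        have r2: "r \<le> \<theta>2 * (\<beta> * r)"
        proof -
          have "eventually (\<lambda>n. r \<le> \<theta>2 * (\<beta> * r + \<gamma> * B n + real (v-1) * B n + e (n + v))) sequentially"
            unfolding eventually_sequentially using ev2 by blast
          from tendsto_le[OF trivial_limit_sequentially l2 tendsto_const this] show ?thesis by simp
        qed
        have mm: "min \<beta> \<gamma> * max \<theta>1 \<theta>2 < 1"
          using assms(8) uE t1 unfolding \<theta>1_def \<theta>2_def
          by (auto simp: pos_less_divide_eq)
        show False
        proof (cases "\<beta> \<le> \<gamma>")
          case True
          then have mb: "min \<beta> \<gamma> = \<beta>" by simp
          have "\<beta> * \<theta>2 \<le> \<beta> * max \<theta>1 \<theta>2" using assms(4) by (intro mult_left_mono) auto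
          then have b: "\<beta> * \<theta>2 < 1" using mm unfolding mb by linarith
          have "(\<beta> * \<theta>2) * r < 1 * r" using b rpos by (rule mult_strict_right_mono)
          moreover have "\<theta>2 * (\<beta> * r) = (\<beta> * \<theta>2) * r" by simp
          ultimately show False using r2 by linarith
        next
          case False
          then have mb: "min \<beta> \<gamma> = \<gamma>" by simp
          have "\<gamma> * \<theta>1 \<le> \<gamma> * max \<theta>1 \<theta>2" using assms(5) by (intro mult_left_mono) auto
          then have b: "\<gamma> * \<theta>1 < 1" using mm unfolding mb by linarith
          have "(\<gamma> * \<theta>1) * r < 1 * r" using b rpos by (rule mult_strict_right_mono)
          moreover have "\<theta>1 * (\<gamma> * r) = (\<gamma> * \<theta>1) * r" by simp
          ultimately show False using r1 by linarith
        qed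
      qed
      then show ?thesis using uE by blast
    qed
  qed
  show ?thesis using ex uniq by blast
qed
end
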